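(* Let $n\ge3$ and $k>n$ be integers and let $X$ be the discrete-time Markov chain on $\mathbb{N}^{n-1}$ described in the context (which is then stable). If $\mathbf{Q}$ is a random vector distributed according to the stationary distribution of $X$, then $\mathbb{E}[|\mathbf{Q}|]<\infty$.
   Context: $\mathbb{N}=\{0,1,2,\dots\}$, $|\mathbf{x}|=x_1+\dots+x_{n-1}$. $\mathbf{0}$, $\mathbf{1}$ are the all-zero and all-one vectors of dimension $n-1$, $\mathbf{e}_l$ the $l$-th unit vector. For $j=0,\dots,n-1$, $R_j$ is the set of $\mathbf{x}\in\mathbb{N}^{n-1}$ with exactly $j$ zero entries. $X$ is the Markov chain on $\mathbb{N}^{n-1}$ with nonzero transition probabilities: from $\mathbf{x}\in R_0$, to $\mathbf{x}-\mathbf{1}$ w.p. $\frac{k-(n-1)}{k}$ and to $\mathbf{x}+\mathbf{e}_l$ w.p. $\frac1k$ ($l=1,\dots,n-1$); from $\mathbf{x}\in R_j$, $1\le j\le n-2$, to $\mathbf{x}+\mathbf{e}_l$ w.p. $\frac{k-(n-1-j)}{kj}$ if $x_l=0$ and w.p. $\frac1k$ if $x_l\ge1$; from $\mathbf{0}$ to $\mathbf{e}_l$ w.p. $\frac1{n-1}$. *)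

theory Defs
  imports "HOL-Probability.Probability"
begin

text \<open>States of the chain: vectors in N^(n-1), encoded as functions nat => nat
  supported on the index set {0..<n-1} (coordinate l of the paper is index l-1 here).\<close>

definition states :: "nat \<Rightarrow> (nat \<Rightarrow> nat) set" where
  "states n = {x. \<forall>i\<ge>n - 1. x i = 0}"

definition norm1 :: "nat \<Rightarrow> (nat \<Rightarrow> nat) \<Rightarrow> nat" where
  "norm1 n x = (\<Sum>i<n - 1. x i)"

definition unitv :: "nat \<Rightarrow> nat \<Rightarrow> nat" where
  "unitv l = (\<lambda>i. if i = l then 1 else 0)"

definition incr :: "(nat \<Rightarrow> nat) \<Rightarrow> nat \<Rightarrow> nat \<Rightarrow> nat" where
  "incr x l = (\<lambda>i. if i = l then x i + 1 else x i)"

definition dec_all :: "nat \<Rightarrow> (nat \<Rightarrow> nat) \<Rightarrow> nat \<Rightarrow> nat" where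
  "dec_all n x = (\<lambda>i. if i < n - 1 then x i - 1 else 0)"

definition nzeros :: "nat \<Rightarrow> (nat \<Rightarrow> nat) \<Rightarrow> nat" where
  "nzeros n x = card {i. i < n - 1 \<and> x i = 0}"

definition trans_prob :: "nat \<Rightarrow> nat \<Rightarrow> (nat \<Rightarrow> nat) \<Rightarrow> (nat \<Rightarrow> nat) \<Rightarrow> real" where
  "trans_prob n k x y =
    (let m = n - 1; j = nzeros n x in
     if j = 0 then
       (if y = dec_all n x then (real k - real m) / real k else 0)
       + (\<Sum>l<m. if y = incr x l then 1 / real k else 0)
     else if j < m then
       (\<Sum>l<m. if y = incr x l then
                  (if x l = 0 then (real k - (real m - real j)) / (real k * real j)
                   else 1 / real k)
                else 0)
     else
       (\<Sum>l<m. if y = unitv l then 1 / real m else 0))"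

definition stationary :: "nat \<Rightarrow> nat \<Rightarrow> (nat \<Rightarrow> nat) pmf \<Rightarrow> bool" where
  "stationary n k p \<longleftrightarrow> set_pmf p \<subseteq> states n \<and>
     (\<forall>y\<in>states n. ((\<lambda>x. pmf p x * trans_prob n k x y) has_sum pmf p y) (states n))"

end

theory Submission
  imports Defs
begin


lemma hs_pt: "a \<in> A \<Longrightarrow> ((\<lambda>y. if y = a then c else (0::real)) has_sum c) A"
proof -
  assume a: "a \<in> A"
  have "((\<lambda>y. if y = a then c else (0::real)) has_sum c) {a}"
    by (rule has_sum_finiteI) auto
  then show ?thesis
    by (subst (asm) has_sum_cong_neutral[where T=A]) (use a in auto)
qed

lemma hs_finsum:
  assumes "finite I" "\<And>i. i \<in> I \<Longrightarrow> (f i has_sum (s i::real)) A"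
  shows "((\<lambda>y. \<Sum>i\<in>I. f i y) has_sum (\<Sum>i\<in>I. s i)) A"
  using assms
proof (induction I rule: finite_induct)
  case empty
  then show ?case by simp
next
  case (insert i I)
  then show ?case by (simp add: has_sum_add)
qed

lemma hs_ptsum:
  fixes c :: "nat \<Rightarrow> real" and g :: "'a \<Rightarrow> real"
  assumes "\<And>l. l < m \<Longrightarrow> t l \<in> A"
  shows "((\<lambda>y. (\<Sum>l<m. if y = t l then c l else 0) * g y) has_sum (\<Sum>l<m. c l * g (t l))) A"
proof -
  have eq: "(\<Sum>l<m. if y = t l then c l else 0) * g y = (\<Sum>l<m. if y = t l then c l * g (t l) else (0::real))" for y
    by (simp add: sum_distrib_right) (rule sum.cong, auto)
  show ?thesis unfolding eq
    by (rule hs_finsum) (auto intro!: hs_pt assms)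
qed

definition Eop :: "nat \<Rightarrow> nat \<Rightarrow> (nat \<Rightarrow> nat) \<Rightarrow> ((nat \<Rightarrow> nat) \<Rightarrow> real) \<Rightarrow> real" where
  "Eop n k x g =
    (let m = n - 1; j = nzeros n x in
     if j = 0 then
       (real k - real m) / real k * g (dec_all n x)
       + (\<Sum>l<m. 1 / real k * g (incr x l))
     else if j < m then
       (\<Sum>l<m. (if x l = 0 then (real k - (real m - real j)) / (real k * real j)
                   else 1 / real k) * g (incr x l))
     else
       (\<Sum>l<m. 1 / real m * g (unitv l)))"

lemma hs_trans:
  assumes "dec_all n x \<in> A" "\<And>l. l < n - 1 \<Longrightarrow> incr x l \<in> A" "\<And>l. l < n - 1 \<Longrightarrow> unitv l \<in> A"
  shows "((\<lambda>y. trans_prob n k x y * g y) has_sum Eop n k x g) A"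
proof -
  consider "nzeros n x = 0" | "nzeros n x \<noteq> 0" "nzeros n x < n - 1" | "\<not> nzeros n x < n - 1" "nzeros n x \<noteq> 0"
    by blast
  then show ?thesis
  proof cases
    case 1
    let ?m = "n - 1"
    have e: "trans_prob n k x y * g y = (if y = dec_all n x then (real k - real ?m) / real k * g (dec_all n x) else 0)
       + (\<Sum>l<?m. if y = incr x l then 1 / real k else 0) * g y" for y
      using 1 by (simp add: trans_prob_def Let_def distrib_right)
    have "((\<lambda>y. (if y = dec_all n x then (real k - real ?m) / real k * g (dec_all n x) else 0)
       + (\<Sum>l<?m. if y = incr x l then 1 / real k else 0) * g y) has_sum
       ((real k - real ?m) / real k * g (dec_all n x) + (\<Sum>l<?m. 1 / real k * g (incr x l)))) A"
      by (intro has_sum_add hs_pt hs_ptsum assms)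
    then show ?thesis unfolding e using 1
      by (simp add: Eop_def Let_def cong: if_cong)
  next
    case 2
    let ?m = "n - 1" and ?j = "nzeros n x"
    have e: "trans_prob n k x y * g y = (\<Sum>l<?m. if y = incr x l then (if x l = 0 then (real k - (real ?m - real ?j)) / (real k * real ?j)
                   else 1 / real k) else 0) * g y" for y
      using 2 unfolding trans_prob_def Let_def by (simp only: if_False if_True not_gr0[symmetric] simp_thms)
    have "((\<lambda>y. (\<Sum>l<?m. if y = incr x l then (if x l = 0 then (real k - (real ?m - real ?j)) / (real k * real ?j)
                   else 1 / real k) else 0) * g y) has_sum (\<Sum>l<?m. (if x l = 0 then (real k - (real ?m - real ?j)) / (real k * real ?j)
                   else 1 / real k) * g (incr x l))) A"
      by (intro hs_ptsum assms)
    then show ?thesis unfolding e using 2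
      by (simp add: Eop_def Let_def cong: if_cong)
  next
    case 3
    let ?m = "n - 1" and ?j = "nzeros n x"
    have e: "trans_prob n k x y * g y = (\<Sum>l<?m. if y = unitv l then 1 / real ?m else 0) * g y" for y
      using 3 by (simp add: trans_prob_def Let_def cong: if_cong)
    have "((\<lambda>y. (\<Sum>l<?m. if y = unitv l then 1 / real ?m else 0) * g y) has_sum (\<Sum>l<?m. 1 / real ?m * g (unitv l))) A"
      by (intro hs_ptsum assms)
    then show ?thesis unfolding e using 3
      by (simp add: Eop_def Let_def cong: if_cong)
  qed
qed



definition Asq :: "nat \<Rightarrow> (nat \<Rightarrow> nat) \<Rightarrow> real" where
  "Asq n x = (\<Sum>i<n - 1. (real (x i))^2)"

definition Vf :: "nat \<Rightarrow> (nat \<Rightarrow> nat) \<Rightarrow> real" where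
  "Vf n x = real n * Asq n x - (real (norm1 n x))^2"

lemma states_incr: "x \<in> states n \<Longrightarrow> l < n - 1 \<Longrightarrow> incr x l \<in> states n"
  by (auto simp: states_def incr_def)
lemma states_dec: "dec_all n x \<in> states n"
  by (auto simp: states_def dec_all_def)
lemma states_unitv: "l < n - 1 \<Longrightarrow> unitv l \<in> states n"
  by (auto simp: states_def unitv_def)

lemma trans_prob_nonneg:
  assumes "k \<ge> n"
  shows "trans_prob n k x y \<ge> 0"
proof -
  have "nzeros n x \<ge> 0" by simp
  show ?thesis using assms
    by (auto simp: trans_prob_def Let_def intro!: add_nonneg_nonneg sum_nonneg divide_nonneg_nonneg mult_nonneg_nonneg)
qed

lemma norm1_real: "real (norm1 n x) = (\<Sum>i<n - 1. real (x i))"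
  by (simp add: norm1_def)

lemma Asq_incr: assumes "l < n - 1" shows "Asq n (incr x l) = Asq n x + 2 * real (x l) + 1"
proof -
  have "(real (incr x l i))^2 = (real (x i))^2 + (if i = l then 2 * real (x l) + 1 else 0)" for i
    by (simp add: incr_def power2_eq_square algebra_simps)
  then show ?thesis using assms by (simp add: Asq_def sum.distrib)
qed

lemma norm1_incr: assumes "l < n - 1" shows "real (norm1 n (incr x l)) = real (norm1 n x) + 1"
proof -
  have "real (incr x l i) = real (x i) + (if i = l then 1 else 0)" for i
    by (simp add: incr_def)
  then show ?thesis using assms by (simp add: norm1_real sum.distrib)
qed

lemma Asq_dec: assumes "\<forall>i<n - 1. x i \<noteq> 0"
  shows "Asq n (dec_all n x) = Asq n x - 2 * real (norm1 n x) + real (n - 1)"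
proof -
  have "(real (dec_all n x i))^2 = (real (x i))^2 - 2 * real (x i) + 1" if "i < n - 1" for i
  proof -
    have "1 \<le> x i" using assms that by auto
    then have h: "real (x i - Suc 0) = real (x i) - 1" by (simp add: of_nat_diff)
    show ?thesis using that by (simp add: dec_all_def h power2_eq_square algebra_simps)
  qed
  then have "Asq n (dec_all n x) = (\<Sum>i<n - 1. (real (x i))^2 - 2 * real (x i) + 1)"
    by (simp add: Asq_def)
  also have "\<dots> = Asq n x - 2 * real (norm1 n x) + real (n - 1)"
    by (simp add: Asq_def norm1_real sum.distrib sum_subtractf sum_distrib_left)
  finally show ?thesis .
qed

lemma norm1_dec: assumes "\<forall>i<n - 1. x i \<noteq> 0"
  shows "real (norm1 n (dec_all n x)) = real (norm1 n x) - real (n - 1)"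
proof -
  have "real (dec_all n x i) = real (x i) - 1" if "i < n - 1" for i
  proof -
    have "1 \<le> x i" using assms that by auto
    then have h: "real (x i - Suc 0) = real (x i) - 1" by (simp add: of_nat_diff)
    show ?thesis using that by (simp add: dec_all_def h)
  qed
  then have "real (norm1 n (dec_all n x)) = (\<Sum>i<n - 1. real (x i) - 1)"
    by (simp add: norm1_real)
  also have "\<dots> = real (norm1 n x) - real (n - 1)"
    by (simp add: norm1_real sum_subtractf)
  finally show ?thesis .
qed

lemma Asq_unitv: "l < n - 1 \<Longrightarrow> Asq n (unitv l) = 1"
  by (simp add: Asq_def unitv_def if_distrib[of real] if_distrib[of "\<lambda>x. x^2"] sum.delta cong: if_cong)

lemma norm1_unitv: "l < n - 1 \<Longrightarrow> norm1 n (unitv l) = 1"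
  by (simp add: norm1_def unitv_def)

lemma nzeros0: "nzeros n x = 0 \<Longrightarrow> \<forall>i<n - 1. x i \<noteq> 0"
  by (auto simp: nzeros_def)

lemma nzeros_all: assumes "\<not> nzeros n x < n - 1" shows "\<forall>i<n - 1. x i = 0"
proof -
  have "{i. i < n - 1 \<and> x i = 0} \<subseteq> {..<n - 1}" by auto
  moreover have "card {..<n - 1} \<le> card {i. i < n - 1 \<and> x i = 0}"
    using assms by (simp add: nzeros_def)
  ultimately have "{i. i < n - 1 \<and> x i = 0} = {..<n - 1}"
    by (intro card_seteq) auto
  then show ?thesis by auto
qed



lemma weights_sum:
  assumes "nzeros n x \<noteq> 0" "nzeros n x < n - 1" "k > 0"
  defines "w \<equiv> \<lambda>l. if x l = 0 then (real k - (real (n - 1) - real (nzeros n x))) / (real k * real (nzeros n x)) else 1 / real k"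
  shows "(\<Sum>l<n - 1. w l) = 1" and "(\<Sum>l<n - 1. w l * real (x l)) = real (norm1 n x) / real k"
proof -
  let ?m = "n - Suc 0" and ?j = "nzeros n x"
  let ?Z = "{i. i < ?m \<and> x i = 0}"
  have Z: "?Z = {..<?m} \<inter> {l. x l = 0}" by auto
  have cZ: "card ({..<?m} \<inter> {l. x l = 0}) = ?j" using Z by (simp add: nzeros_def)
  have cNZ: "card ({..<?m} \<inter> - {l. x l = 0}) = ?m - ?j"
  proof -
    have "{..<?m} \<inter> - {l. x l = 0} = {..<?m} - ({..<?m} \<inter> {l. x l = 0})" by auto
    then show ?thesis using cZ by (simp add: card_Diff_subset)
  qed
  have "(\<Sum>l<n - 1. w l) = real ?j * ((real k - (real ?m - real ?j)) / (real k * real ?j)) + real (?m - ?j) * (1 / real k)"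
    unfolding w_def by (simp add: sum.If_cases cZ cNZ)
  also have "\<dots> = 1" using assms(1,2,3) by (simp add: of_nat_diff field_simps)
  finally show "(\<Sum>l<n - 1. w l) = 1" .
  have "w l * real (x l) = real (x l) / real k" for l
    unfolding w_def by auto
  then show "(\<Sum>l<n - 1. w l * real (x l)) = real (norm1 n x) / real k"
    by (simp add: norm1_real sum_divide_distrib)
qed

lemma Eop_one:
  assumes "n = Suc m" "m \<ge> 1" "k > n"
  shows "Eop n k x (\<lambda>_. 1) = 1"
proof -
  consider "nzeros n x = 0" | "nzeros n x \<noteq> 0" "nzeros n x < n - 1" | "\<not> nzeros n x < n - 1" "nzeros n x \<noteq> 0"
    by blast
  then show ?thesis
  proof cases
    case 1
    then show ?thesis using assms by (simp add: Eop_def field_simps)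
  next
    case 2
    then show ?thesis using weights_sum(1)[OF 2] assms by (simp add: Eop_def Let_def cong: if_cong)
  next
    case 3
    then show ?thesis using assms by (simp add: Eop_def)
  qed
qed

lemma Eop_V:
  assumes "n = Suc m" "m \<ge> 1" "k > n" "x \<in> states n"
  shows "Eop n k x (Vf n) = Vf n x - 2 * (real k - real n) / real k * real (norm1 n x) + real m"
proof -
  have k0: "real k > 0" using assms by simp
  have Vi: "Vf n (incr x l) = real n * (Asq n x + 2 * real (x l) + 1) - (real (norm1 n x) + 1)^2" if "l < n - 1" for l
    using that by (simp add: Vf_def Asq_incr norm1_incr)
  consider "nzeros n x = 0" | "nzeros n x \<noteq> 0" "nzeros n x < n - 1" | "\<not> nzeros n x < n - 1" "nzeros n x \<noteq> 0"
    by blast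
  then show ?thesis
  proof cases
    case 1
    have nz: "\<forall>i<n - 1. x i \<noteq> 0" using nzeros0[OF 1] .
    have Vd: "Vf n (dec_all n x) = real n * (Asq n x - 2 * real (norm1 n x) + real m) - (real (norm1 n x) - real m)^2"
    proof -
      have nm: "n - Suc 0 = m" using assms(1) by simp
      show ?thesis by (simp add: Vf_def Asq_dec[OF nz] norm1_dec[OF nz] nm)
    qed
    have "(\<Sum>l<n - 1. 1 / real k * Vf n (incr x l)) = (\<Sum>l<n - 1. 1 / real k * (real n * (Asq n x + 1) - (real (norm1 n x) + 1)^2) + 2 * real n / real k * real (x l))"
      by (rule sum.cong) (auto simp: Vi algebra_simps)
    also have "\<dots> = real m / real k * (real n * (Asq n x + 1) - (real (norm1 n x) + 1)^2) + 2 * real n / real k * real (norm1 n x)"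
      using assms(1) by (simp add: sum.distrib norm1_real flip: sum_distrib_left sum_divide_distrib)
    finally have S: "(\<Sum>l<n - 1. 1 / real k * Vf n (incr x l)) = \<dots>" .
    have nm: "real (n - 1) = real m" "real n = real m + 1" using assms(1) by simp_all
    have "Eop n k x (Vf n) = (real k - real (n - 1)) / real k * Vf n (dec_all n x) + (\<Sum>l<n - 1. 1 / real k * Vf n (incr x l))"
      using 1 by (simp add: Eop_def Let_def)
    also have "\<dots> = (real k - real m) / real k * (real n * (Asq n x - 2 * real (norm1 n x) + real m) - (real (norm1 n x) - real m)^2)
       + (real m / real k * (real n * (Asq n x + 1) - (real (norm1 n x) + 1)^2) + 2 * real n / real k * real (norm1 n x))"
      by (simp only: S Vd nm)
    finally show ?thesis using k0 nm(2)
      by (simp add: Vf_def) (simp add: field_simps power2_eq_square)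
  next
    case 2
    define w where "w \<equiv> \<lambda>l. if x l = 0 then (real k - (real (n - 1) - real (nzeros n x))) / (real k * real (nzeros n x)) else 1 / real k"
    have ws: "(\<Sum>l<n - Suc 0. w l) = 1" "(\<Sum>l<n - Suc 0. w l * real (x l)) = real (norm1 n x) / real k"
      using weights_sum[OF 2 ] assms by (simp_all add: w_def)
    have "Eop n k x (Vf n) = (\<Sum>l<n - 1. w l * Vf n (incr x l))"
      using 2 by (simp add: Eop_def w_def Let_def cong: if_cong)
    also have "\<dots> = (\<Sum>l<n - 1. w l * (real n * (Asq n x + 1) - (real (norm1 n x) + 1)^2) + 2 * real n * (w l * real (x l)))"
      by (rule sum.cong) (auto simp: Vi algebra_simps)
    also have "\<dots> = (real n * (Asq n x + 1) - (real (norm1 n x) + 1)^2) + 2 * real n * (real (norm1 n x) / real k)"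
      by (simp add: sum.distrib sum_distrib_left[symmetric] sum_distrib_right[symmetric] ws)
    finally show ?thesis using k0 assms(1)
      by (simp add: Vf_def) (simp add: field_simps power2_eq_square)
  next
    case 3
    have z: "\<forall>i<n - 1. x i = 0" using nzeros_all[OF 3(1)] .
    have x0: "Asq n x = 0" "norm1 n x = 0" using z by (simp_all add: Asq_def norm1_def)
    have Vu: "Vf n (unitv l) = real n - 1" if "l < n - 1" for l
      using that by (simp add: Vf_def Asq_unitv norm1_unitv)
    have "Eop n k x (Vf n) = (\<Sum>l<n - 1. 1 / real (n - 1) * Vf n (unitv l))"
      using 3 by (simp add: Eop_def Let_def)
    also have "\<dots> = (\<Sum>l<n - 1. 1 / real (n - 1) * (real n - 1))"
      by (rule sum.cong) (auto simp: Vu)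
    also have "\<dots> = real m" using assms(1,2) by simp
    finally show ?thesis using x0 by (simp add: Vf_def)
  qed
qed



lemma integrable_from_summable:
  fixes f :: "'a \<Rightarrow> real"
  assumes "(\<lambda>x. pmf p x * f x) summable_on UNIV" "\<And>x. f x \<ge> 0"
  shows "integrable (measure_pmf p) f"
proof -
  have "(\<lambda>x. norm (pmf p x * f x)) summable_on UNIV"
    using assms by (simp add: abs_mult)
  then have "Infinite_Set_Sum.abs_summable_on (\<lambda>x. pmf p x * f x) UNIV"
    using abs_summable_equivalent by blast
  then have "integrable (count_space UNIV) (\<lambda>x. pmf p x *\<^sub>R f x)"
    by (simp add: abs_summable_on_def)
  then show ?thesis
    by (subst measure_pmf_eq_density, subst integrable_density) auto
qed

lemma Vf_ge:
  assumes "n = Suc m"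
  shows "real (norm1 n x) \<le> Vf n x" "0 \<le> Vf n x"
proof -
  have cs: "(real (norm1 n x))^2 \<le> Asq n x * real m"
    using sum_squared_le_sum_of_squares[of "\<lambda>i. real (x i)" "{..<m}"] assms
    by (simp add: norm1_real Asq_def)
  have "real (norm1 n x) \<le> Asq n x"
    unfolding norm1_real Asq_def
    by (rule sum_mono) (metis of_nat_mult of_nat_le_iff le_square power2_eq_square)
  moreover have "Asq n x \<le> Vf n x" using cs assms by (simp add: Vf_def algebra_simps)
  ultimately show "real (norm1 n x) \<le> Vf n x" by simp
  then show "0 \<le> Vf n x" by (rule order_trans[rotated]) simp
qed



lemma pmf_sum_le1: "finite F \<Longrightarrow> sum (pmf p) F \<le> 1"
  by (metis measure_measure_pmf_finite measure_pmf.prob_le_1)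

lemma pmf_summable: "pmf p summable_on A"
  by (rule nonneg_bdd_above_summable_on) (auto intro!: bdd_aboveI2[where M=1] pmf_sum_le1)

lemma pmf_infsum_le1: "infsum (pmf p) A \<le> 1"
proof -
  have "infsum (pmf p) A = (SUP F\<in>{F. finite F \<and> F\<subseteq>A}. sum (pmf p) F)"
    by (rule nonneg_bdd_above_infsum) (auto intro!: bdd_aboveI2[where M=1] pmf_sum_le1)
  also have "\<dots> \<le> 1"
    by (rule cSUP_least) (auto intro!: pmf_sum_le1)
  finally show ?thesis .
qed

lemma pmf_bnd_summable:
  fixes h :: "'a \<Rightarrow> real"
  assumes "\<And>x. x \<in> A \<Longrightarrow> 0 \<le> h x \<and> h x \<le> B"
  shows "(\<lambda>x. pmf p x * h x) summable_on A"
proof (rule summable_on_comparison_test)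
  show "(\<lambda>x. pmf p x * B) summable_on A"
    by (intro summable_on_cmult_left pmf_summable)
  show "pmf p x * h x \<le> pmf p x * B" if "x \<in> A" for x
    using assms[OF that] by (simp add: mult_left_mono)
  show "0 \<le> pmf p x * h x" if "x \<in> A" for x
    using assms[OF that] by simp
qed

context
  fixes n k m :: nat and p :: "(nat \<Rightarrow> nat) pmf"
  assumes nm: "n = Suc m" and m1: "m \<ge> 1" and kn: "k > n" and stat: "stationary n k p"
begin

lemma hsS: "x \<in> states n \<Longrightarrow> ((\<lambda>y. trans_prob n k x y * g y) has_sum Eop n k x g) (states n)"
  by (intro hs_trans states_dec states_incr states_unitv)

lemma P_nonneg: "trans_prob n k x y \<ge> 0"
  using kn by (intro trans_prob_nonneg) simp

lemma Psum_le1: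
  assumes "x \<in> states n" "finite G" "G \<subseteq> states n"
  shows "(\<Sum>y\<in>G. trans_prob n k x y) \<le> 1"
proof -
  have "((\<lambda>y. trans_prob n k x y * 1) has_sum 1) (states n)"
    using hsS[OF assms(1), of "\<lambda>_. 1"] Eop_one[OF nm m1 kn] by simp
  from finite_sum_le_has_sum[OF this assms(2,3)] show ?thesis
    using P_nonneg by simp
qed

lemma E_mono:
  assumes "x \<in> states n" "\<And>y. y \<in> states n \<Longrightarrow> g y \<le> h y"
  shows "Eop n k x g \<le> Eop n k x h"
  by (rule has_sum_mono[OF hsS[OF assms(1)] hsS[OF assms(1)]])
     (use assms(2) P_nonneg in \<open>auto intro: mult_left_mono\<close>)

lemma E_const:
  assumes "x \<in> states n"
  shows "Eop n k x (\<lambda>_. c) = c"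
proof -
  have "((\<lambda>y. c * (trans_prob n k x y * 1)) has_sum (c * 1)) (states n)"
    using has_sum_cmult_right[OF hsS[OF assms(1), of "\<lambda>_. 1"]] Eop_one[OF nm m1 kn] by simp
  then have "((\<lambda>y. trans_prob n k x y * c) has_sum c) (states n)"
    by (simp add: mult.commute)
  then show ?thesis using hsS[OF assms(1), of "\<lambda>_. c"] has_sum_unique by blast
qed

lemma E_nonneg:
  assumes "x \<in> states n" "\<And>y. y \<in> states n \<Longrightarrow> 0 \<le> g y"
  shows "0 \<le> Eop n k x g"
  using E_mono[OF assms(1), of "\<lambda>_. 0" g] E_const[OF assms(1), of 0] assms(2) by simp

lemma tonelli:
  assumes g: "\<And>y. y \<in> states n \<Longrightarrow> 0 \<le> g y \<and> g y \<le> B"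
  shows "infsum (\<lambda>x. pmf p x * Eop n k x g) (states n) = infsum (\<lambda>y. pmf p y * g y) (states n)"
proof -
  define S where "S = states n"
  define f where "f x y = pmf p x * (trans_prob n k x y * g y)" for x y
  have fnn: "0 \<le> f x y" if "y \<in> S" for x y
    using g[of y] that P_nonneg by (simp add: f_def S_def)
  have B0: "0 \<le> B" using g[of "\<lambda>_. 0"] by (auto simp: states_def)
  have summ: "(\<lambda>(x, y). f x y) summable_on (S \<times> S)"
  proof (rule nonneg_bdd_above_summable_on)
    show "0 \<le> (case z of (x, y) \<Rightarrow> f x y)" if "z \<in> S \<times> S" for z
      using that fnn by auto
    show "bdd_above (sum (\<lambda>(x, y). f x y) ` {F. F \<subseteq> S \<times> S \<and> finite F})"
    proof (rule bdd_aboveI2[where M=B], clarify)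
      fix F assume F: "F \<subseteq> S \<times> S" "finite F"
      have "sum (\<lambda>(x, y). f x y) F \<le> sum (\<lambda>(x, y). f x y) (fst ` F \<times> snd ` F)"
        by (rule sum_mono2) (use F fnn in \<open>auto simp: finite_imageI intro: rev_image_eqI\<close>)
      also have "\<dots> = (\<Sum>x\<in>fst ` F. \<Sum>y\<in>snd ` F. f x y)"
        by (simp add: sum.cartesian_product)
      also have "\<dots> \<le> (\<Sum>x\<in>fst ` F. pmf p x * B)"
      proof (rule sum_mono)
        fix x assume x: "x \<in> fst ` F"
        have xS: "x \<in> S" using x F by auto
        have sS: "snd ` F \<subseteq> S" using F by auto
        have "(\<Sum>y\<in>snd ` F. f x y) = pmf p x * (\<Sum>y\<in>snd ` F. trans_prob n k x y * g y)"
          by (simp add: f_def sum_distrib_left)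
        also have "\<dots> \<le> pmf p x * (\<Sum>y\<in>snd ` F. trans_prob n k x y * B)"
        proof (rule mult_left_mono, rule sum_mono)
          fix y assume "y \<in> snd ` F"
          then have "y \<in> states n" using sS by (auto simp: S_def)
          then show "trans_prob n k x y * g y \<le> trans_prob n k x y * B"
            using g P_nonneg by (auto intro: mult_left_mono)
        qed simp
        also have "\<dots> = pmf p x * B * (\<Sum>y\<in>snd ` F. trans_prob n k x y)"
          by (simp add: sum_distrib_right sum_distrib_left mult_ac)
        also have "\<dots> \<le> pmf p x * B * 1"
          by (intro mult_left_mono Psum_le1) (use xS sS F B0 in \<open>auto simp: S_def\<close>)
        finally show "(\<Sum>y\<in>snd ` F. f x y) \<le> pmf p x * B" by simp
      qed
      also have "\<dots> = sum (pmf p) (fst ` F) * B"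
        by (simp add: sum_distrib_right)
      also have "\<dots> \<le> 1 * B"
        by (intro mult_right_mono pmf_sum_le1) (use F B0 in auto)
      finally show "sum (\<lambda>(x, y). f x y) F \<le> B" by simp
    qed
  qed
  have sw: "infsum (\<lambda>x. infsum (\<lambda>y. f x y) S) S = infsum (\<lambda>y. infsum (\<lambda>x. f x y) S) S"
    by (rule infsum_swap_banach[OF summ])
  have i1: "infsum (\<lambda>y. f x y) S = pmf p x * Eop n k x g" if "x \<in> S" for x
  proof -
    have "x \<in> states n" using that by (simp add: S_def)
    from has_sum_cmult_right[OF hsS[OF this, of g], of "pmf p x"]
    show ?thesis unfolding f_def S_def by (rule infsumI)
  qed
  have i2: "infsum (\<lambda>x. f x y) S = pmf p y * g y" if "y \<in> S" for y
  proof -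
    have "((\<lambda>x. pmf p x * trans_prob n k x y) has_sum pmf p y) S"
      using stat that unfolding stationary_def S_def by blast
    then have "((\<lambda>x. pmf p x * trans_prob n k x y * g y) has_sum (pmf p y * g y)) S"
      by (rule has_sum_cmult_left)
    then show ?thesis unfolding f_def by (simp add: mult.assoc infsumI)
  qed
  have "infsum (\<lambda>x. pmf p x * Eop n k x g) S = infsum (\<lambda>x. infsum (\<lambda>y. f x y) S) S"
    by (rule infsum_cong) (simp add: i1)
  also have "\<dots> = infsum (\<lambda>y. infsum (\<lambda>x. f x y) S) S" by (rule sw)
  also have "\<dots> = infsum (\<lambda>y. pmf p y * g y) S"
    by (rule infsum_cong) (simp add: i2)
  finally show ?thesis unfolding S_def .
qed


lemma main_bound:
  assumes F: "finite F" "F \<subseteq> states n"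
  shows "2 * (real k - real n) / real k * (\<Sum>x\<in>F. pmf p x * real (norm1 n x)) \<le> real m"
proof -
  define S where "S = states n"
  define c where "c = 2 * (real k - real n) / real k"
  have c0: "0 \<le> c" using kn by (simp add: c_def)
  define N where "N = (\<Sum>x\<in>F. Vf n x)"
  have N0: "0 \<le> N" unfolding N_def by (intro sum_nonneg Vf_ge(2)[OF nm])
  have VN: "Vf n x \<le> N" if "x \<in> F" for x
    unfolding N_def by (rule member_le_sum) (use that F Vf_ge(2)[OF nm] in auto)
  define g where "g y = min (Vf n y) N" for y
  have g: "0 \<le> g y \<and> g y \<le> N" for y
    using Vf_ge(2)[OF nm, of y] N0 by (auto simp: g_def)
  define h where "h x = (if Vf n x \<le> N then c * real (norm1 n x) else 0)" for x
  have h: "0 \<le> h x \<and> h x \<le> c * N" for x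
    using Vf_ge[OF nm, of x] c0 N0 by (auto simp: h_def intro: mult_left_mono)
  have Eg: "0 \<le> Eop n k x g \<and> Eop n k x g \<le> N" if "x \<in> S" for x
  proof
    show "0 \<le> Eop n k x g" using E_nonneg[of x g] g that by (simp add: S_def)
    show "Eop n k x g \<le> N" using E_mono[of x g "\<lambda>_. N"] E_const[of x N] g that by (simp add: S_def)
  qed
  have su: "(\<lambda>x. pmf p x * h x) summable_on S" by (rule pmf_bnd_summable) (use h in blast)
  have se: "(\<lambda>x. pmf p x * Eop n k x g) summable_on S" by (rule pmf_bnd_summable) (use Eg in blast)
  have sg: "(\<lambda>x. pmf p x * g x) summable_on S" by (rule pmf_bnd_summable) (use g in blast)
  have sm: "(\<lambda>x. pmf p x * real m) summable_on S" by (rule pmf_bnd_summable) auto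
  have pw: "pmf p x * h x + pmf p x * Eop n k x g \<le> pmf p x * g x + pmf p x * real m" if x: "x \<in> S" for x
  proof (cases "Vf n x \<le> N")
    case True
    have "Eop n k x g \<le> Eop n k x (Vf n)"
      by (rule E_mono) (use x in \<open>auto simp: S_def g_def\<close>)
    also have "\<dots> = Vf n x - c * real (norm1 n x) + real m"
      using Eop_V[OF nm m1 kn, of x] x by (simp add: S_def c_def)
    finally have "h x + Eop n k x g \<le> g x + real m"
      using True by (simp add: h_def g_def)
    then show ?thesis by (simp add: distrib_left[symmetric] mult_left_mono)
  next
    case False
    have "Eop n k x g \<le> Eop n k x (\<lambda>_. N)"
      by (rule E_mono) (use x g in \<open>auto simp: S_def\<close>)
    also have "\<dots> = N" using E_const x by (simp add: S_def)
    finally have "h x + Eop n k x g \<le> g x + real m"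
      using False by (simp add: h_def g_def)
    then show ?thesis by (simp add: distrib_left[symmetric] mult_left_mono)
  qed
  have "infsum (\<lambda>x. pmf p x * h x) S + infsum (\<lambda>x. pmf p x * Eop n k x g) S
        = infsum (\<lambda>x. pmf p x * h x + pmf p x * Eop n k x g) S"
    by (rule infsum_add[symmetric]) (fact su, fact se)
  also have "\<dots> \<le> infsum (\<lambda>x. pmf p x * g x + pmf p x * real m) S"
    by (rule infsum_mono) (auto intro: summable_on_add su se sg sm pw)
  also have "\<dots> = infsum (\<lambda>x. pmf p x * g x) S + infsum (\<lambda>x. pmf p x * real m) S"
    by (rule infsum_add) (fact sg, fact sm)
  finally have 1: "infsum (\<lambda>x. pmf p x * h x) S \<le> infsum (\<lambda>x. pmf p x * real m) S"
    using tonelli[of g N] g by (simp add: S_def)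
  have "infsum (\<lambda>x. pmf p x * real m) S = infsum (pmf p) S * real m"
    by (rule infsum_cmult_left) (simp add: pmf_summable)
  also have "\<dots> \<le> 1 * real m" by (intro mult_right_mono pmf_infsum_le1) simp
  finally have 2: "infsum (\<lambda>x. pmf p x * h x) S \<le> real m" using 1 by simp
  have "(\<Sum>x\<in>F. pmf p x * h x) \<le> infsum (\<lambda>x. pmf p x * h x) S"
    by (rule finite_sum_le_infsum[OF su F(1)]) (use F h in \<open>auto simp: S_def\<close>)
  moreover have "(\<Sum>x\<in>F. pmf p x * h x) = c * (\<Sum>x\<in>F. pmf p x * real (norm1 n x))"
    by (simp add: sum_distrib_left h_def VN mult_ac cong: sum.cong)
  ultimately show ?thesis using 2 by (simp add: c_def)
qed

lemma summable_norm1: "(\<lambda>x. pmf p x * real (norm1 n x)) summable_on UNIV"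
proof (rule nonneg_bdd_above_summable_on)
  show "0 \<le> pmf p x * real (norm1 n x)" for x by simp
  have c0: "0 < 2 * (real k - real n) / real k" using kn by simp
  show "bdd_above (sum (\<lambda>x. pmf p x * real (norm1 n x)) ` {F. F \<subseteq> UNIV \<and> finite F})"
  proof (rule bdd_aboveI2[where M="real m / (2 * (real k - real n) / real k)"], clarify)
    fix F :: "(nat \<Rightarrow> nat) set" assume F: "finite F"
    have "(\<Sum>x\<in>F. pmf p x * real (norm1 n x)) = (\<Sum>x\<in>F \<inter> states n. pmf p x * real (norm1 n x))"
    proof (rule sum.mono_neutral_right)
      show "\<forall>x\<in>F - F \<inter> states n. pmf p x * real (norm1 n x) = 0"
        using stat by (auto simp: stationary_def set_pmf_iff)
    qed (use F in auto)
    also have "\<dots> \<le> real m / (2 * (real k - real n) / real k)"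
    proof -
      define c where "c = 2 * (real k - real n) / real k"
      have "c * (\<Sum>x\<in>F \<inter> states n. pmf p x * real (norm1 n x)) \<le> real m"
        using main_bound[of "F \<inter> states n"] F unfolding c_def by auto
      moreover have "0 < c" using c0 by (simp add: c_def)
      ultimately show ?thesis unfolding c_def[symmetric]
        by (simp add: pos_le_divide_eq mult.commute)
    qed
    finally show "(\<Sum>x\<in>F. pmf p x * real (norm1 n x)) \<le> real m / (2 * (real k - real n) / real k)" .
  qed
qed

end


theorem proposition8p2:
  fixes n k :: nat and p :: "(nat \<Rightarrow> nat) pmf"
  assumes "n \<ge> 3" and "k > n"
    and "stationary n k p"
  shows "integrable (measure_pmf p) (\<lambda>x. real (norm1 n x))"
proof -
  obtain m where nm: "n = Suc m" using assms(1) by (cases n) auto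
  have m1: "m \<ge> 1" using assms(1) nm by simp
  show ?thesis
    by (rule integrable_from_summable[OF summable_norm1[OF nm m1 assms(2) assms(3)]]) simp
qed

end
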